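(* Let $\varphi$ be a sublinear metric-compatible function and $T\in\mathrm{Aut}(X,\mu)$ aperiodic. Then for every $U\in[T]_\varphi$, $\lim_{n\to\infty}\frac{1}{n}d_{\varphi,T}(U^n,\mathrm{id})=0$.
   Context: $(X,\mu)$ standard atomless probability space; $\mathrm{Aut}(X,\mu)$ measure-preserving transformations modulo null sets. For aperiodic $T$, $[T]$ is the set of $U\in\mathrm{Aut}(X,\mu)$ with $U(x)=T^{c_U(x)}(x)$ a.e. for a measurable $c_U:X\to\mathbb Z$. $\varphi:\mathbb R_+\to\mathbb R_+$ is metric-compatible if subadditive, non-decreasing, $\varphi(0)=0$, $\varphi(t)>0$ for $t>0$; sublinear if $\varphi(t)/t\to0$. $[T]_\varphi=\{U\in[T]:\int_X\varphi(|c_U|)d\mu<\infty\}$ and $d_{\varphi,T}(U,V)=\int_X\varphi(|c_U(x)-c_V(x)|)d\mu$. *)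

theory Defs
  imports "HOL-Probability.Probability"
begin

definition std_atomless_prob :: "'a::polish_space measure \<Rightarrow> bool" where
  "std_atomless_prob M \<longleftrightarrow> prob_space M \<and> sets M = sets borel \<and> (\<forall>x. emeasure M {x} = 0)"

definition aut :: "'a measure \<Rightarrow> ('a \<Rightarrow> 'a) \<Rightarrow> bool" where
  "aut M T \<longleftrightarrow> bij T \<and> T \<in> measurable M M \<and> inv T \<in> measurable M M \<and> distr M M T = M"

definition tpow :: "('a \<Rightarrow> 'a) \<Rightarrow> int \<Rightarrow> 'a \<Rightarrow> 'a" where
  "tpow T k = (if 0 \<le> k then T ^^ nat k else (inv T) ^^ nat (- k))"

definition aperiodic :: "'a measure \<Rightarrow> ('a \<Rightarrow> 'a) \<Rightarrow> bool" where
  "aperiodic M T \<longleftrightarrow> (AE x in M. \<forall>n::nat. n > 0 \<longrightarrow> (T ^^ n) x \<noteq> x)"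

definition is_cocycle :: "'a measure \<Rightarrow> ('a \<Rightarrow> 'a) \<Rightarrow> ('a \<Rightarrow> 'a) \<Rightarrow> ('a \<Rightarrow> int) \<Rightarrow> bool" where
  "is_cocycle M T U c \<longleftrightarrow> c \<in> measurable M (count_space UNIV) \<and> (AE x in M. U x = tpow T (c x) x)"

definition full_group :: "'a measure \<Rightarrow> ('a \<Rightarrow> 'a) \<Rightarrow> ('a \<Rightarrow> 'a) set" where
  "full_group M T = {U. aut M U \<and> (\<exists>c. is_cocycle M T U c)}"

text \<open>The cocycle c_U (unique a.e. when T is aperiodic).\<close>
definition cocycle :: "'a measure \<Rightarrow> ('a \<Rightarrow> 'a) \<Rightarrow> ('a \<Rightarrow> 'a) \<Rightarrow> 'a \<Rightarrow> int" where
  "cocycle M T U = (SOME c. is_cocycle M T U c)"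

definition metric_compatible :: "(real \<Rightarrow> real) \<Rightarrow> bool" where
  "metric_compatible \<phi> \<longleftrightarrow>
     (\<forall>t\<ge>0. \<phi> t \<ge> 0) \<and>
     (\<forall>s\<ge>0. \<forall>t\<ge>0. \<phi> (s + t) \<le> \<phi> s + \<phi> t) \<and>
     (\<forall>s\<ge>0. \<forall>t\<ge>s. \<phi> s \<le> \<phi> t) \<and>
     \<phi> 0 = 0 \<and> (\<forall>t>0. \<phi> t > 0)"

definition sublinear :: "(real \<Rightarrow> real) \<Rightarrow> bool" where
  "sublinear \<phi> \<longleftrightarrow> ((\<lambda>t. \<phi> t / t) \<longlongrightarrow> 0) at_top"

definition phi_full_group :: "'a measure \<Rightarrow> ('a \<Rightarrow> 'a) \<Rightarrow> (real \<Rightarrow> real) \<Rightarrow> ('a \<Rightarrow> 'a) set" where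
  "phi_full_group M T \<phi> =
     {U \<in> full_group M T. (\<integral>\<^sup>+ x. ennreal (\<phi> \<bar>real_of_int (cocycle M T U x)\<bar>) \<partial>M) < \<infinity>}"

definition d_phi :: "'a measure \<Rightarrow> ('a \<Rightarrow> 'a) \<Rightarrow> (real \<Rightarrow> real) \<Rightarrow> ('a \<Rightarrow> 'a) \<Rightarrow> ('a \<Rightarrow> 'a) \<Rightarrow> ennreal" where
  "d_phi M T \<phi> U V =
     (\<integral>\<^sup>+ x. ennreal (\<phi> \<bar>real_of_int (cocycle M T U x - cocycle M T V x)\<bar>) \<partial>M)"

end

theory Submission
  imports Defs
begin


lemma tpow_0: "tpow T 0 x = x" by (simp add: tpow_def)

lemma tpow_succ:
  assumes "bij T" shows "tpow T (k+1) x = T (tpow T k x)"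
proof (cases "k \<ge> 0")
  case True
  then have "nat (k+1) = Suc (nat k)" by simp
  then show ?thesis using True by (simp add: tpow_def)
next
  case False
  show ?thesis
  proof (cases "k = -1")
    case True
    then show ?thesis using assms by (simp add: tpow_def bij_is_surj surj_f_inv_f)
  next
    case F2: False
    define m where "m = nat (-(k+1))"
    have "nat (-k) = Suc m" using False F2 by (simp add: m_def)
    moreover have "nat (-(k+1)) = m" by (simp add: m_def)
    ultimately show ?thesis using False F2 assms
      by (simp add: tpow_def bij_is_surj surj_f_inv_f)
  qed
qed

lemma tpow_pred:
  assumes "bij T" shows "tpow T (k - 1) x = inv T (tpow T k x)"
  using tpow_succ[OF assms, of "k-1" x] assms by (simp add: bij_is_inj)

lemma tpow_add:
  assumes "bij T" shows "tpow T (a + b) x = tpow T a (tpow T b x)"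
proof (induct a rule: int_induct[where k=0])
  case base then show ?case by (simp add: tpow_0)
next
  case (step1 i)
  have "tpow T (i + 1 + b) x = tpow T ((i + b) + 1) x" by (simp add: algebra_simps)
  also have "\<dots> = T (tpow T (i+b) x)" by (rule tpow_succ[OF assms])
  also have "\<dots> = tpow T (i+1) (tpow T b x)" using step1 tpow_succ[OF assms] by simp
  finally show ?case .
next
  case (step2 i)
  have "tpow T (i - 1 + b) x = tpow T ((i + b) - 1) x" by (simp add: algebra_simps)
  also have "\<dots> = inv T (tpow T (i+b) x)" by (rule tpow_pred[OF assms])
  also have "\<dots> = tpow T (i-1) (tpow T b x)" using step2 tpow_pred[OF assms] by simp
  finally show ?case .
qed

lemma tpow_fix_pos:
  assumes "bij T" "\<forall>n::nat. n > 0 \<longrightarrow> (T ^^ n) x \<noteq> x" "tpow T k x = x" "k \<noteq> 0"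
  shows False
proof (cases "k > 0")
  case True
  then show False using assms(2,3) by (simp add: tpow_def)
next
  case False
  then have k: "-k > 0" using assms(4) by simp
  have "tpow T (-k) x = tpow T (-k) (tpow T k x)" using assms(3) by simp
  also have "\<dots> = x" using tpow_add[OF assms(1), of "-k" k x] by (simp add: tpow_0)
  finally show False using k assms(2) by (simp add: tpow_def)
qed

lemma tpow_inj_aper:
  assumes "bij T" "\<forall>n::nat. n > 0 \<longrightarrow> (T ^^ n) x \<noteq> x" "tpow T a x = tpow T b x"
  shows "a = b"
proof (rule ccontr)
  assume ne: "a \<noteq> b"
  have "tpow T (a - b) x = tpow T (-b) (tpow T a x)"
    using tpow_add[OF assms(1), of "-b" a x] by simp
  also have "\<dots> = tpow T (-b) (tpow T b x)" using assms(3) by simp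
  also have "\<dots> = x" using tpow_add[OF assms(1), of "-b" b x] by (simp add: tpow_0)
  finally have "tpow T (a - b) x = x" .
  from tpow_fix_pos[OF assms(1,2) this] ne show False by simp
qed

lemma cocycle_AE_unique:
  assumes "bij T" "aperiodic M T" "is_cocycle M T U c1" "is_cocycle M T U c2"
  shows "AE x in M. c1 x = c2 x"
proof -
  have a: "AE x in M. \<forall>n::nat. n > 0 \<longrightarrow> (T ^^ n) x \<noteq> x" using assms(2) unfolding aperiodic_def .
  have b: "AE x in M. U x = tpow T (c1 x) x" using assms(3) unfolding is_cocycle_def by blast
  have c: "AE x in M. U x = tpow T (c2 x) x" using assms(4) unfolding is_cocycle_def by blast
  from a b c show ?thesis
  proof eventually_elim
    case (elim x)
    then show ?case using tpow_inj_aper[OF assms(1), of x "c1 x" "c2 x"] by simp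
  qed
qed

lemma cocycle_is:
  assumes "is_cocycle M T U c" shows "is_cocycle M T U (cocycle M T U)"
  unfolding cocycle_def using assms by (metis someI)

lemma aut_funpow:
  assumes "U \<in> M \<rightarrow>\<^sub>M M" "distr M M U = M"
  shows "(U ^^ n) \<in> M \<rightarrow>\<^sub>M M \<and> distr M M (U ^^ n) = M"
proof (induct n)
  case 0 then show ?case by (simp add: id_def)
next
  case (Suc n)
  then have m: "(U ^^ Suc n) \<in> M \<rightarrow>\<^sub>M M" using assms(1) by (simp add: measurable_comp)
  have "distr M M (U ^^ Suc n) = distr (distr M M (U^^n)) M U"
    using distr_distr[OF assms(1), of "U^^n" M] Suc by simp
  also have "\<dots> = M" using Suc assms by simp
  finally show ?case using m by (simp add: comp_def)
qed

lemma AE_funpow: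
  assumes "U \<in> M \<rightarrow>\<^sub>M M" "distr M M U = M" "AE y in M. P y"
  shows "AE x in M. P ((U^^n) x)"
proof -
  have e: "distr M M (U^^n) = M" using aut_funpow[OF assms(1,2), of n] by blast
  have "AE y in distr M M (U^^n). P y" unfolding e by (rule assms(3))
  then show ?thesis using aut_funpow[OF assms(1,2), of n] AE_distrD[of "U^^n" M M P] by blast
qed

lemma sum_cocycle:
  assumes "U \<in> M \<rightarrow>\<^sub>M M" "distr M M U = M" "bij T" "is_cocycle M T U c"
  shows "AE x in M. (U^^n) x = tpow T (\<Sum>i<n. c ((U^^i) x)) x"
proof (induct n)
  case 0 then show ?case by (simp add: tpow_0)
next
  case (Suc n)
  have h: "AE x in M. U ((U^^n) x) = tpow T (c ((U^^n) x)) ((U^^n) x)"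
    using assms(4) unfolding is_cocycle_def
    by (intro AE_funpow[OF assms(1,2), where P="\<lambda>y. U y = tpow T (c y) y"]) auto
  from h Suc show ?case
  proof eventually_elim
    case (elim x)
    then show ?case
      by (simp add: tpow_add[OF assms(3), symmetric] add.commute)
  qed
qed

lemma sum_cocycle_meas:
  assumes "U \<in> M \<rightarrow>\<^sub>M M" "distr M M U = M" "c \<in> M \<rightarrow>\<^sub>M count_space UNIV"
  shows "(\<lambda>x. \<Sum>i<n. c ((U^^i) x)::int) \<in> M \<rightarrow>\<^sub>M count_space UNIV"
proof (induct n)
  case 0 then show ?case by simp
next
  case (Suc n)
  have d: "(\<lambda>x. c ((U^^n) x)) \<in> M \<rightarrow>\<^sub>M count_space UNIV"
    by (rule measurable_compose[OF conjunct1[OF aut_funpow[OF assms(1,2), of n]] assms(3)])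
  have e: "\<And>i::int. (\<lambda>x. i + c ((U^^n) x)) \<in> M \<rightarrow>\<^sub>M count_space UNIV"
  proof -
    fix i :: int
    have "(\<lambda>j::int. i + j) \<in> count_space UNIV \<rightarrow>\<^sub>M count_space UNIV" by simp
    from measurable_compose[OF d this] show "(\<lambda>x. i + c ((U^^n) x)) \<in> M \<rightarrow>\<^sub>M count_space UNIV" .
  qed
  have "(\<lambda>x. (\<lambda>i x. i + c ((U^^n) x)) (\<Sum>i<n. c ((U^^i) x)) x) \<in> M \<rightarrow>\<^sub>M count_space UNIV"
    by (rule measurable_compose_countable[OF e Suc])
  then show ?case by simp
qed



lemma mc_nonneg: "metric_compatible \<phi> \<Longrightarrow> t \<ge> 0 \<Longrightarrow> \<phi> t \<ge> 0"
  unfolding metric_compatible_def by blast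
lemma mc_add: "metric_compatible \<phi> \<Longrightarrow> s \<ge> 0 \<Longrightarrow> t \<ge> 0 \<Longrightarrow> \<phi> (s + t) \<le> \<phi> s + \<phi> t"
  unfolding metric_compatible_def by blast
lemma mc_mono: "metric_compatible \<phi> \<Longrightarrow> s \<ge> 0 \<Longrightarrow> s \<le> t \<Longrightarrow> \<phi> s \<le> \<phi> t"
  unfolding metric_compatible_def by blast
lemma mc_0: "metric_compatible \<phi> \<Longrightarrow> \<phi> 0 = 0"
  unfolding metric_compatible_def by blast

lemma phi_sum:
  assumes "metric_compatible \<phi>" "finite I" "\<forall>i\<in>I. b i \<ge> 0"
  shows "\<phi> (sum b I) \<le> (\<Sum>i\<in>I. \<phi> (b i))"
  using assms(2,3)
proof (induct I rule: finite_induct)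
  case empty then show ?case using mc_0[OF assms(1)] by simp
next
  case (insert x F)
  have "\<phi> (sum b (insert x F)) = \<phi> (b x + sum b F)" using insert by simp
  also have "\<dots> \<le> \<phi> (b x) + \<phi> (sum b F)"
    using insert by (intro mc_add[OF assms(1)]) (auto intro: sum_nonneg)
  also have "\<dots> \<le> \<phi> (b x) + (\<Sum>i\<in>F. \<phi> (b i))" using insert by simp
  finally show ?case using insert by simp
qed

lemma point_bound:
  assumes mc: "metric_compatible \<phi>"
  shows "\<phi> \<bar>\<Sum>i<n. real_of_int (k i)\<bar> \<le> \<phi> (real n * real L) +
    (\<Sum>i<n. (if real L < \<bar>real_of_int (k i)\<bar> then \<phi> \<bar>real_of_int (k i)\<bar> else 0))"
proof -
  define a where "a i = (if real L < \<bar>real_of_int (k i)\<bar> then 0 else \<bar>real_of_int (k i)\<bar>)" for i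
  define b where "b i = (if real L < \<bar>real_of_int (k i)\<bar> then \<bar>real_of_int (k i)\<bar> else 0)" for i
  have a0: "\<forall>i. a i \<ge> 0" "\<forall>i. a i \<le> real L" unfolding a_def by auto
  have b0: "\<forall>i. b i \<ge> 0" unfolding b_def by auto
  have ab: "\<And>i. \<bar>real_of_int (k i)\<bar> = a i + b i" unfolding a_def b_def by auto
  have A: "sum a {..<n} \<le> real n * real L"
    using sum_bounded_above[of "{..<n}" a "real L"] a0 by simp
  have "\<bar>\<Sum>i<n. real_of_int (k i)\<bar> \<le> (\<Sum>i<n. \<bar>real_of_int (k i)\<bar>)" by (rule sum_abs)
  also have "\<dots> = sum a {..<n} + sum b {..<n}" by (simp add: ab sum.distrib)
  finally have "\<phi> \<bar>\<Sum>i<n. real_of_int (k i)\<bar> \<le> \<phi> (sum a {..<n} + sum b {..<n})"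
    by (intro mc_mono[OF mc]) auto
  also have "\<dots> \<le> \<phi> (sum a {..<n}) + \<phi> (sum b {..<n})"
    using a0 b0 by (intro mc_add[OF mc] sum_nonneg) auto
  also have "\<phi> (sum a {..<n}) \<le> \<phi> (real n * real L)"
    using a0 A by (intro mc_mono[OF mc] sum_nonneg) auto
  also have "\<phi> (sum b {..<n}) \<le> (\<Sum>i<n. \<phi> (b i))" using phi_sum[OF mc, of "{..<n}" b] b0 by simp
  also have "(\<Sum>i<n. \<phi> (b i)) = (\<Sum>i<n. (if real L < \<bar>real_of_int (k i)\<bar> then \<phi> \<bar>real_of_int (k i)\<bar> else 0))"
    unfolding b_def using mc_0[OF mc] by (intro sum.cong) auto
  finally show ?thesis by simp
qed

lemma tail:
  assumes mc: "metric_compatible \<phi>" and c: "c \<in> M \<rightarrow>\<^sub>M count_space UNIV"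
    and fin: "(\<integral>\<^sup>+ x. ennreal (\<phi> \<bar>real_of_int (c x)\<bar>) \<partial>M) < \<infinity>" and e: "e > 0"
  shows "\<exists>L::nat. (\<integral>\<^sup>+ x. ennreal (if real L < \<bar>real_of_int (c x)\<bar> then \<phi> \<bar>real_of_int (c x)\<bar> else 0) \<partial>M) < ennreal e"
proof -
  define f where "f L x = ennreal (if real L < \<bar>real_of_int (c x)\<bar> then \<phi> \<bar>real_of_int (c x)\<bar> else 0)" for L :: nat and x
  have meas: "f L \<in> borel_measurable M" for L
  proof -
    have "(\<lambda>j::int. ennreal (if real L < \<bar>real_of_int j\<bar> then \<phi> \<bar>real_of_int j\<bar> else 0)) \<in> count_space UNIV \<rightarrow>\<^sub>M borel"
      by simp
    from measurable_compose[OF c this] show ?thesis unfolding f_def .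
  qed
  have dec: "AE x in M. f (Suc i) x \<le> f i x" for i
    unfolding f_def using mc_nonneg[OF mc] by (auto intro!: AE_I2 ennreal_leI)
  have "(\<integral>\<^sup>+ x. f 0 x \<partial>M) \<le> (\<integral>\<^sup>+ x. ennreal (\<phi> \<bar>real_of_int (c x)\<bar>) \<partial>M)"
    unfolding f_def using mc_nonneg[OF mc] by (intro nn_integral_mono) (auto intro: ennreal_leI)
  with fin have f0: "(\<integral>\<^sup>+ x. f 0 x \<partial>M) < \<infinity>" by (meson le_less_trans)
  have inf0: "(INF i. f i x) = 0" for x
  proof -
    have "(INF i. f i x) \<le> f (nat \<lceil>\<bar>real_of_int (c x)\<bar>\<rceil>) x" by (rule INF_lower) simp
    also have "f (nat \<lceil>\<bar>real_of_int (c x)\<bar>\<rceil>) x = 0" unfolding f_def by simp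
    finally show ?thesis by simp
  qed
  have "(INF i. integral\<^sup>N M (f i)) = (\<integral>\<^sup>+ x. (INF i. f i x) \<partial>M)"
    using nn_integral_monotone_convergence_INF_AE'[OF dec meas f0] by simp
  also have "\<dots> = 0" by (simp add: inf0)
  finally have "(INF i. integral\<^sup>N M (f i)) < ennreal e" using e by simp
  then obtain L where "integral\<^sup>N M (f L) < ennreal e" by (auto simp: INF_less_iff)
  then show ?thesis unfolding f_def by blast
qed



lemma key_bound:
  assumes mc: "metric_compatible \<phi>" and Um: "U \<in> M \<rightarrow>\<^sub>M M" and Ud: "distr M M U = M"
    and bT: "bij T" and ap: "aperiodic M T" and cc: "is_cocycle M T U c" and pM: "prob_space M"
  shows "d_phi M T \<phi> (U^^n) id \<le> ennreal (\<phi> (real n * real L)) +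
    of_nat n * (\<integral>\<^sup>+ x. ennreal (if real L < \<bar>real_of_int (c x)\<bar> then \<phi> \<bar>real_of_int (c x)\<bar> else 0) \<partial>M)"
proof -
  define \<psi> where "\<psi> x = ennreal (if real L < \<bar>real_of_int (c x)\<bar> then \<phi> \<bar>real_of_int (c x)\<bar> else 0)" for x
  define S where "S x = (\<Sum>i<n. c ((U^^i) x))" for x
  have cm: "c \<in> M \<rightarrow>\<^sub>M count_space UNIV" using cc unfolding is_cocycle_def by blast
  have isS: "is_cocycle M T (U^^n) S"
    unfolding is_cocycle_def S_def using sum_cocycle_meas[OF Um Ud cm] sum_cocycle[OF Um Ud bT cc] by blast
  have cn: "AE x in M. cocycle M T (U^^n) x = S x"
    by (rule cocycle_AE_unique[OF bT ap cocycle_is[OF isS] isS])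
  have is0: "is_cocycle M T id (\<lambda>_. 0)" unfolding is_cocycle_def by (simp add: tpow_0)
  have c0: "AE x in M. cocycle M T id x = 0"
    by (rule cocycle_AE_unique[OF bT ap cocycle_is[OF is0] is0])
  have psim: "\<psi> \<in> borel_measurable M"
  proof -
    have "(\<lambda>j::int. ennreal (if real L < \<bar>real_of_int j\<bar> then \<phi> \<bar>real_of_int j\<bar> else 0)) \<in> count_space UNIV \<rightarrow>\<^sub>M borel"
      by simp
    from measurable_compose[OF cm this] show ?thesis unfolding \<psi>_def .
  qed
  have psiU: "(\<lambda>x. \<psi> ((U^^i) x)) \<in> borel_measurable M" for i
    by (rule measurable_compose[OF conjunct1[OF aut_funpow[OF Um Ud, of i]] psim])
  have intU: "(\<integral>\<^sup>+ x. \<psi> ((U^^i) x) \<partial>M) = integral\<^sup>N M \<psi>" for i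
  proof -
    have e: "distr M M (U^^i) = M" using aut_funpow[OF Um Ud, of i] by blast
    have "integral\<^sup>N (distr M M (U^^i)) \<psi> = (\<integral>\<^sup>+ x. \<psi> ((U^^i) x) \<partial>M)"
      by (rule nn_integral_distr[OF conjunct1[OF aut_funpow[OF Um Ud, of i]]]) (simp add: e psim)
    then show ?thesis unfolding e by simp
  qed
  have pt: "AE x in M. ennreal (\<phi> \<bar>real_of_int (cocycle M T (U^^n) x - cocycle M T id x)\<bar>)
       \<le> ennreal (\<phi> (real n * real L)) + (\<Sum>i<n. \<psi> ((U^^i) x))"
    using cn c0
  proof eventually_elim
    case (elim x)
    let ?r = "\<lambda>i. (if real L < \<bar>real_of_int (c ((U^^i) x))\<bar> then \<phi> \<bar>real_of_int (c ((U^^i) x))\<bar> else 0)"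
    have r0: "\<And>i. ?r i \<ge> 0" using mc_nonneg[OF mc] by simp
    have n0: "\<phi> (real n * real L) \<ge> 0" using mc_nonneg[OF mc] by simp
    have "\<phi> \<bar>real_of_int (cocycle M T (U^^n) x - cocycle M T id x)\<bar> = \<phi> \<bar>\<Sum>i<n. real_of_int (c ((U^^i) x))\<bar>"
      using elim by (simp add: S_def)
    also have "\<dots> \<le> \<phi> (real n * real L) + (\<Sum>i<n. ?r i)"
      by (rule point_bound[OF mc])
    finally have "ennreal (\<phi> \<bar>real_of_int (cocycle M T (U^^n) x - cocycle M T id x)\<bar>)
       \<le> ennreal (\<phi> (real n * real L) + (\<Sum>i<n. ?r i))" by (rule ennreal_leI)
    also have "\<dots> = ennreal (\<phi> (real n * real L)) + (\<Sum>i<n. ennreal (?r i))"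
      using r0 n0 by (simp add: ennreal_plus sum_nonneg)
    finally show ?case unfolding \<psi>_def .
  qed
  have "d_phi M T \<phi> (U^^n) id \<le> (\<integral>\<^sup>+ x. ennreal (\<phi> (real n * real L)) + (\<Sum>i<n. \<psi> ((U^^i) x)) \<partial>M)"
    unfolding d_phi_def by (rule nn_integral_mono_AE[OF pt])
  also have "\<dots> = (\<integral>\<^sup>+ x. ennreal (\<phi> (real n * real L)) \<partial>M) + (\<integral>\<^sup>+ x. (\<Sum>i<n. \<psi> ((U^^i) x)) \<partial>M)"
    by (rule nn_integral_add) (auto intro!: borel_measurable_sum psiU)
  also have "(\<integral>\<^sup>+ x. (\<Sum>i<n. \<psi> ((U^^i) x)) \<partial>M) = (\<Sum>i<n. integral\<^sup>N M \<psi>)"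
    by (simp add: nn_integral_sum psiU intU)
  also have "(\<integral>\<^sup>+ x. ennreal (\<phi> (real n * real L)) \<partial>M) = ennreal (\<phi> (real n * real L))"
    using prob_space.emeasure_space_1[OF pM] by simp
  finally show ?thesis unfolding \<psi>_def by (simp add: id_def)
qed



theorem mainTheorem13:
  fixes M :: "'a::polish_space measure" and T U :: "'a \<Rightarrow> 'a" and \<phi> :: "real \<Rightarrow> real"
  assumes "std_atomless_prob M"
    and "metric_compatible \<phi>" and "sublinear \<phi>"
    and "aut M T" and "aperiodic M T"
    and "U \<in> phi_full_group M T \<phi>"
  shows "(\<lambda>n::nat. d_phi M T \<phi> (U ^^ n) id / of_nat n) \<longlonglongrightarrow> 0"
proof -
  have pM: "prob_space M" using assms(1) unfolding std_atomless_prob_def by blast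
  have mc: "metric_compatible \<phi>" by fact
  have bT: "bij T" using assms(4) unfolding aut_def by blast
  have ap: "aperiodic M T" by fact
  have Ufg: "U \<in> full_group M T" and fin: "(\<integral>\<^sup>+ x. ennreal (\<phi> \<bar>real_of_int (cocycle M T U x)\<bar>) \<partial>M) < \<infinity>"
    using assms(6) unfolding phi_full_group_def by auto
  have Um: "U \<in> M \<rightarrow>\<^sub>M M" and Ud: "distr M M U = M" using Ufg unfolding full_group_def aut_def by auto
  obtain c' where "is_cocycle M T U c'" using Ufg unfolding full_group_def by auto
  then have cc: "is_cocycle M T U (cocycle M T U)" by (rule cocycle_is)
  define c where "c = cocycle M T U"
  have cc': "is_cocycle M T U c" using cc by (simp add: c_def)
  have cm: "c \<in> M \<rightarrow>\<^sub>M count_space UNIV" using cc' unfolding is_cocycle_def by blast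
  have fin': "(\<integral>\<^sup>+ x. ennreal (\<phi> \<bar>real_of_int (c x)\<bar>) \<partial>M) < \<infinity>" using fin by (simp add: c_def)
  show ?thesis
  proof (rule order_tendstoI)
    fix a :: ennreal assume "a < 0" then show "eventually (\<lambda>n. a < d_phi M T \<phi> (U ^^ n) id / of_nat n) sequentially"
      by simp
  next
    fix e :: ennreal assume e: "0 < e"
    obtain z where z: "0 < z" "z < e" using dense[OF e] by blast
    define r where "r = enn2real z"
    have ztop: "z < top" using z(2) top.not_eq_extremum by fastforce
    have zr: "z = ennreal r" unfolding r_def using ztop by (simp add: less_top)
    have r0: "r > 0" using z(1) ztop unfolding r_def by (simp add: enn2real_positive_iff less_top)
    define eps where "eps = r / 2"
    have eps0: "eps > 0" using r0 by (simp add: eps_def)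
    obtain L :: nat where L: "(\<integral>\<^sup>+ x. ennreal (if real L < \<bar>real_of_int (c x)\<bar> then \<phi> \<bar>real_of_int (c x)\<bar> else 0) \<partial>M) < ennreal eps"
      using tail[OF mc cm fin' eps0] by blast
    have "eventually (\<lambda>t. \<phi> t / t < eps / (real L + 1)) at_top"
      using assms(3) eps0 unfolding sublinear_def by (intro order_tendstoD(2)) auto
    then obtain T0 where T0: "\<And>t. t \<ge> T0 \<Longrightarrow> \<phi> t / t < eps / (real L + 1)"
      unfolding eventually_at_top_linorder by blast
    show "eventually (\<lambda>n. d_phi M T \<phi> (U ^^ n) id / of_nat n < e) sequentially"
      unfolding eventually_sequentially
    proof (intro exI allI impI)
      fix n :: nat assume n: "max 1 (nat \<lceil>T0\<rceil>) \<le> n"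
      have n1: "real n \<ge> 1" using n by simp
      have nT: "real n \<ge> T0" using n by linarith
      have phib: "\<phi> (real n * real L) \<le> real n * eps"
      proof (cases "L = 0")
        case True then show ?thesis using mc_0[OF mc] eps0 by simp
      next
        case False
        then have L1: "real L \<ge> 1" by simp
        define t where "t = real n * real L"
        have tpos: "t > 0" using n1 L1 by (simp add: t_def)
        have "real n * 1 \<le> real n * real L" using n1 L1 by (intro mult_left_mono) auto
        then have "t \<ge> T0" using nT unfolding t_def by linarith
        then have "\<phi> t / t < eps / (real L + 1)" by (rule T0)
        then have "\<phi> t < eps / (real L + 1) * t" using tpos by (simp add: divide_less_eq)
        also have "\<dots> = real n * eps * (real L / (real L + 1))" unfolding t_def by (simp add: field_simps)
        also have "\<dots> \<le> real n * eps" using n1 eps0 by (intro mult_left_le) (auto simp: field_simps)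
        finally show ?thesis unfolding t_def by simp
      qed
      have "d_phi M T \<phi> (U ^^ n) id \<le> ennreal (\<phi> (real n * real L)) +
          of_nat n * (\<integral>\<^sup>+ x. ennreal (if real L < \<bar>real_of_int (c x)\<bar> then \<phi> \<bar>real_of_int (c x)\<bar> else 0) \<partial>M)"
        by (rule key_bound[OF mc Um Ud bT ap cc' pM])
      also have "\<dots> \<le> ennreal (real n * eps) + of_nat n * ennreal eps"
        using phib L by (intro add_mono mult_left_mono ennreal_leI) auto
      also have "\<dots> = ennreal (real n * r)"
        using eps0 by (simp add: ennreal_of_nat_eq_real_of_nat ennreal_mult'[symmetric] ennreal_plus[symmetric] eps_def)
      finally have dle: "d_phi M T \<phi> (U ^^ n) id \<le> ennreal (real n * r)" .
      have "d_phi M T \<phi> (U ^^ n) id / of_nat n \<le> ennreal (real n * r) / ennreal (real n)"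
        using divide_right_mono_ennreal[OF dle] by (simp add: ennreal_of_nat_eq_real_of_nat)
      also have "\<dots> = ennreal r" using n1 r0 by (simp add: divide_ennreal)
      also have "\<dots> < e" using z zr by simp
      finally show "d_phi M T \<phi> (U ^^ n) id / of_nat n < e" .
    qed
  qed
qed

end
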